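(* Let $Q\ge1$ and $\Omega_Q=\{(x,y)\in\mathbb R^2:\ x>0,\ y>0,\ xy\le Q\}$. Let $\mathcal B(x,y)=4Q^{1/2}(xy)^{1/2}-xy$ and, for $X_0\in\Omega_Q$, $\mathcal B_{X_0}(X)=\mathcal B(X)-\mathcal B'(X_0)(X-X_0)$, where $\mathcal B'(X_0)$ is the gradient of $\mathcal B$ at $X_0$. Then (1) $0\le\mathcal B(X)\le 4Q$ for all $X\in\Omega_Q$; (2) for all $X_0=(x_0,y_0)$, $X=(x,y)$ in $\Omega_Q$, $$\mathcal B_{X_0}(X_0)-\mathcal B_{X_0}(X)\ge c\,|x-x_0|\cdot|y-y_0|,$$ where $c$ is an absolute constant. *)

theory Defs
  imports "HOL-Analysis.Analysis"
begin

definition OmegaQ :: "real \<Rightarrow> (real \<times> real) set" where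
  "OmegaQ Q = {(x, y). x > 0 \<and> y > 0 \<and> x * y \<le> Q}"

definition Bell :: "real \<Rightarrow> real \<times> real \<Rightarrow> real" where
  "Bell Q X = 4 * sqrt Q * sqrt (fst X * snd X) - fst X * snd X"

definition Bshift :: "real \<Rightarrow> real \<times> real \<Rightarrow> real \<times> real \<Rightarrow> real" where
  "Bshift Q X0 X = Bell Q X - frechet_derivative (Bell Q) (at X0) (X - X0)"

end

theory Submission
  imports Defs
begin

lemma sqrt_superadd:
  fixes zz ww pp rr :: real
  assumes "zz > 0" "ww > 0" "pp \<ge> 0" "rr \<ge> 0"
  shows "sqrt ((zz+pp)*(ww+rr)) \<ge> sqrt (zz*ww) + sqrt (pp*rr)"
proof -
  have h1: "(sqrt (zz*ww) * sqrt (pp*rr))^2 = (zz*ww)*(pp*rr)"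
    using assms by (simp add: power_mult_distrib)
  have h2: "(zz*ww)*(pp*rr) \<le> ((zz*rr + ww*pp)/2)^2"
  proof -
    have "0 \<le> (zz*rr - ww*pp)^2" by simp
    thus ?thesis by (simp add: power2_eq_square algebra_simps)
  qed
  have h3: "2 * (sqrt (zz*ww) * sqrt (pp*rr)) \<le> zz*rr + ww*pp"
  proof -
    have "sqrt (zz*ww) * sqrt (pp*rr) \<le> (zz*rr + ww*pp)/2"
      apply (rule power2_le_imp_le)
      using h1 h2 assms by auto
    thus ?thesis by simp
  qed
  have "(sqrt (zz*ww) + sqrt (pp*rr))^2 = zz*ww + 2*(sqrt (zz*ww) * sqrt (pp*rr)) + pp*rr"
    using assms by (simp add: power2_eq_square algebra_simps)
  also have "\<dots> \<le> (zz+pp)*(ww+rr)" using h3 by (simp add: algebra_simps)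
  finally have "(sqrt (zz*ww) + sqrt (pp*rr))^2 \<le> (zz+pp)*(ww+rr)" .
  thus ?thesis using assms by (simp add: real_le_rsqrt)
qed

lemma Bell_deriv:
  assumes "x0 > 0" "y0 > 0"
  shows "(Bell Q has_derivative (\<lambda>h. (2 * sqrt Q / sqrt (x0*y0) - 1) * (y0 * fst h + x0 * snd h))) (at (x0,y0))"
proof -
  have "(Bell Q has_derivative (\<lambda>h. 4 * sqrt Q * (inverse (sqrt (x0*y0)) / 2 * (x0 * snd h + fst h * y0)) - (x0 * snd h + fst h * y0))) (at (x0,y0))"
    unfolding Bell_def using assms
    by (auto intro!: derivative_eq_intros)
  thus ?thesis
    using assms by (rule_tac has_derivative_eq_rhs) (auto simp: fun_eq_iff field_simps)
qed

theorem lemma5p2: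
  shows "(\<forall>Q \<ge> 1. \<forall>X \<in> OmegaQ Q. 0 \<le> Bell Q X \<and> Bell Q X \<le> 4 * Q) \<and>
         (\<exists>c > 0. \<forall>Q \<ge> 1. \<forall>X0 \<in> OmegaQ Q. \<forall>X \<in> OmegaQ Q.
            Bshift Q X0 X0 - Bshift Q X0 X \<ge> c * \<bar>fst X - fst X0\<bar> * \<bar>snd X - snd X0\<bar>)"
proof (rule conjI)
  show "\<forall>Q \<ge> 1. \<forall>X \<in> OmegaQ Q. 0 \<le> Bell Q X \<and> Bell Q X \<le> 4 * Q"
  proof (intro allI impI ballI)
    fix Q :: real and X assume Q: "Q \<ge> 1" and X: "X \<in> OmegaQ Q"
    obtain x y where Xe: "X = (x,y)" by force
    from X Xe have xy: "x > 0" "y > 0" "x*y \<le> Q" by (auto simp: OmegaQ_def)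
    define s where "s = sqrt (x*y)"
    define q where "q = sqrt Q"
    have s0: "s \<ge> 0" unfolding s_def using xy by simp
    have ss: "s^2 = x*y" unfolding s_def using xy by (simp add: less_imp_le)
    have qq: "q^2 = Q" unfolding q_def using Q by simp
    have sq: "s \<le> q" unfolding s_def q_def using xy by simp
    have B: "Bell Q X = 4*q* s - s^2" unfolding Bell_def Xe s_def q_def using xy by simp
    have "0 \<le> 4*q* s - s^2" using s0 sq by (simp add: power2_eq_square mult_mono)
    moreover have "4*q* s - s^2 \<le> 4*Q"
    proof -
      have "0 \<le> (2*q - s)^2" by simp
      thus ?thesis using qq by (simp add: power2_eq_square algebra_simps)
    qed
    ultimately show "0 \<le> Bell Q X \<and> Bell Q X \<le> 4 * Q" using B by simp
  qed
next
  show "\<exists>c > 0. \<forall>Q \<ge> 1. \<forall>X0 \<in> OmegaQ Q. \<forall>X \<in> OmegaQ Q.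
            Bshift Q X0 X0 - Bshift Q X0 X \<ge> c * \<bar>fst X - fst X0\<bar> * \<bar>snd X - snd X0\<bar>"
  proof (rule exI[of _ 1], intro conjI allI impI ballI)
    fix Q :: real and X0 X assume Q: "Q \<ge> 1" and X0: "X0 \<in> OmegaQ Q" and X: "X \<in> OmegaQ Q"
    obtain x y where Xe: "X = (x,y)" by force
    obtain x0 y0 where X0e: "X0 = (x0,y0)" by force
    from X Xe have xy: "x > 0" "y > 0" "x*y \<le> Q" by (auto simp: OmegaQ_def)
    from X0 X0e have xy0: "x0 > 0" "y0 > 0" "x0*y0 \<le> Q" by (auto simp: OmegaQ_def)
    define K where "K = 2 * sqrt Q / sqrt (x0*y0) - 1"
    have fd: "frechet_derivative (Bell Q) (at X0) = (\<lambda>h. K * (y0 * fst h + x0 * snd h))"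
      using frechet_derivative_at[OF Bell_deriv[OF xy0(1,2), of Q]] X0e K_def by simp
    define s where "s = sqrt (x*y)"
    define s0 where "s0 = sqrt (x0*y0)"
    define q where "q = sqrt Q"
    define a where "a = x - x0"
    define b where "b = y - y0"
    have s0p: "s0 > 0" unfolding s0_def using xy0 by simp
    have sge: "s \<ge> 0" unfolding s_def using xy by simp
    have ss: "s^2 = x*y" unfolding s_def using xy by (simp add: less_imp_le)
    have ss0: "s0^2 = x0*y0" unfolding s0_def using xy0 by (simp add: less_imp_le)
    have sq: "s0 \<le> q" unfolding s0_def q_def using xy0 by simp
    have Kd: "K = 2*q/s0 - 1" unfolding K_def q_def s0_def by simp
    have lhs: "Bshift Q X0 X0 - Bshift Q X0 X = (4*q* s0 - s0^2) - (4*q* s - s^2) + K*(y0*a + x0*b)"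
    proof -
      have "Bshift Q X0 X0 - Bshift Q X0 X = Bell Q X0 - Bell Q X + K*(y0*a + x0*b)"
        unfolding Bshift_def fd a_def b_def using Xe X0e by (simp add: algebra_simps)
      thus ?thesis
        unfolding Bell_def Xe X0e s_def s0_def q_def using xy xy0 by (simp add: less_imp_le)
    qed
    have tt: "s^2 = s0^2 + y0*a + x0*b + a*b" unfolding ss ss0 a_def b_def by (simp add: algebra_simps)
    have E: "s0 * ((4*q* s0 - s0^2) - (4*q* s - s^2) + K*(y0*a + x0*b)) = 2*q*(s - s0)^2 - (2*q - s0)*(a*b)"
    proof -
      have "y0*a + x0*b = s^2 - s0^2 - a*b" using tt by simp
      hence "s0 * ((4*q* s0 - s0^2) - (4*q* s - s^2) + K*(y0*a + x0*b))
           = s0 * ((4*q* s0 - s0^2) - (4*q* s - s^2) + (2*q/s0 - 1)*(s^2 - s0^2 - a*b))"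
        by (simp add: Kd)
      also have "\<dots> = 2*q*(s - s0)^2 - (2*q - s0)*(a*b)"
        using s0p by (simp add: field_simps power2_eq_square)
      finally show ?thesis .
    qed
    have main: "2*q*(s - s0)^2 - (2*q - s0)*(a*b) \<ge> s0 * \<bar>a*b\<bar>"
    proof (cases "a*b \<le> 0")
      case True
      have "0 \<le> 2*q*(s - s0)^2" using sq s0p by simp
      moreover have "(2*q - s0)*(-(a*b)) \<ge> s0*(-(a*b))"
        using True sq by (intro mult_right_mono) auto
      ultimately show ?thesis using True by (simp add: algebra_simps)
    next
      case False
      have sqab: "(s - s0)^2 \<ge> a*b"
      proof (cases "a > 0")
        case True
        with False have b: "b > 0" by (metis mult_pos_neg not_le not_less_iff_gr_or_eq mult_zero_right)
        have "sqrt ((x0+a)*(y0+b)) \<ge> sqrt (x0*y0) + sqrt (a*b)"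
          using sqrt_superadd[of x0 y0 a b] xy0 True b by simp
        hence "s - s0 \<ge> sqrt (a*b)" unfolding s_def s0_def a_def b_def by simp
        hence "(s - s0)^2 \<ge> (sqrt (a*b))^2"
          using False by (intro power_mono) auto
        thus ?thesis using False by simp
      next
        case na: False
        with False have a: "a < 0" by (metis mult_eq_0_iff not_le order_antisym_conv zero_le_mult_iff)
        with False have b: "b < 0" by (auto simp add: zero_less_mult_iff not_le)
        have "sqrt ((x+(-a))*(y+(-b))) \<ge> sqrt (x*y) + sqrt (a*b)"
          using sqrt_superadd[of x y "-a" "-b"] xy a b by simp
        hence "s0 - s \<ge> sqrt (a*b)" unfolding s_def s0_def a_def b_def by simp
        hence "(s0 - s)^2 \<ge> (sqrt (a*b))^2"
          using False by (intro power_mono) auto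
        thus ?thesis using False by (simp add: power2_commute)
      qed
      have "2*q*(a*b) \<le> 2*q*(s - s0)^2" using sqab sq s0p by (intro mult_left_mono) auto
      thus ?thesis using False by (simp add: algebra_simps)
    qed
    have "s0 * (1 * \<bar>a\<bar> * \<bar>b\<bar>) \<le> s0 * (Bshift Q X0 X0 - Bshift Q X0 X)"
      using main E lhs by (simp add: abs_mult)
    hence "1 * \<bar>a\<bar> * \<bar>b\<bar> \<le> Bshift Q X0 X0 - Bshift Q X0 X"
      using s0p by (simp only: mult_le_cancel_left_pos)
    thus "1 * \<bar>fst X - fst X0\<bar> * \<bar>snd X - snd X0\<bar> \<le> Bshift Q X0 X0 - Bshift Q X0 X"
      using Xe X0e a_def b_def by simp
  qed simp
qed

end
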